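(* Let $a,b\in\mathbb Q$ with $a,b>0$ such that the quaternion algebra $D=\left(\frac{a,b}{\mathbb Q}\right)$ (generators $i,j$, relations $i^2=a$, $j^2=b$, $ij=-ji$) is a division algebra, with the involution $\ast$ determined by $i^\ast=i$, $j^\ast=j$. Let $K=\mathbb Q(i)$ (on which $\ast$ is the identity), and let $N_1,N_2$ be the positive cones of the two orderings of $K\cong\mathbb Q(\sqrt a)$, with $i\in N_1$ and $-i\in N_2$. Then: (i) $b\in N_1\cap N_2$, but neither $N_1$ nor $N_2$ is of the form $M\cap K$ for a unital hermitian cone $M$ on $(D,\ast)$; (ii) with respect to the right $K$-basis $1,j$ of $D$, left regular representation $\lambda\colon D\to M_2(K)$, $A=\mathrm{diag}(1,b)$ and $X^\#=A^{-1}X^{T}A$, there exist two distinct unital hermitian cones $L_1\neq L_2$ on $(M_2(K),\#)$ with $\lambda^{-1}(L_1)=\lambda^{-1}(L_2)$.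
   Context: A unital hermitian cone on a ring $R$ with involution $\ast$ is a subset $M\subseteq\{r:r^\ast=r\}$ with $1\in M$, $M+M\subseteq M$, $aMa^\ast\subseteq M$ for all $a\in R$, and $M\cap-M=\{0\}$. The left regular representation is defined by $de_\tau=\sum_\sigma e_\sigma\lambda(d)_{\sigma\tau}$ for the basis $(e_1,e_2)=(1,j)$. *)

theory Defs
  imports Complex_Main "HOL-Algebra.Ring"
begin

definition unital_hermitian_cone :: "('r, 'm) ring_scheme \<Rightarrow> ('r \<Rightarrow> 'r) \<Rightarrow> 'r set \<Rightarrow> bool" where
  "unital_hermitian_cone R star M \<longleftrightarrow>
     M \<subseteq> {r \<in> carrier R. star r = r}
   \<and> \<one>\<^bsub>R\<^esub> \<in> M
   \<and> (\<forall>x\<in>M. \<forall>y\<in>M. x \<oplus>\<^bsub>R\<^esub> y \<in> M)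
   \<and> (\<forall>c\<in>carrier R. \<forall>x\<in>M. c \<otimes>\<^bsub>R\<^esub> x \<otimes>\<^bsub>R\<^esub> star c \<in> M)
   \<and> M \<inter> {\<ominus>\<^bsub>R\<^esub> x | x. x \<in> M} = {\<zero>\<^bsub>R\<^esub>}"

text \<open>An element (x0,x1,x2,x3) stands for x0 + x1 i + x2 j + x3 ij,
  with i^2 = a, j^2 = b, ij = -ji.\<close>

type_synonym quat = "rat \<times> rat \<times> rat \<times> rat"

definition qadd :: "quat \<Rightarrow> quat \<Rightarrow> quat" where
  "qadd x y = (case x of (x0,x1,x2,x3) \<Rightarrow> case y of (y0,y1,y2,y3) \<Rightarrow>
      (x0+y0, x1+y1, x2+y2, x3+y3))"

definition qmul :: "rat \<Rightarrow> rat \<Rightarrow> quat \<Rightarrow> quat \<Rightarrow> quat" where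
  "qmul a b x y = (case x of (x0,x1,x2,x3) \<Rightarrow> case y of (y0,y1,y2,y3) \<Rightarrow>
      (x0*y0 + a*x1*y1 + b*x2*y2 - a*b*x3*y3,
       x0*y1 + x1*y0 - b*x2*y3 + b*x3*y2,
       x0*y2 + x2*y0 + a*x1*y3 - a*x3*y1,
       x0*y3 + x3*y0 + x1*y2 - x2*y1))"

definition qone :: quat where "qone = (1,0,0,0)"
definition qzero :: quat where "qzero = (0,0,0,0)"
definition qi :: quat where "qi = (0,1,0,0)"
definition qj :: quat where "qj = (0,0,1,0)"

definition quat_ring :: "rat \<Rightarrow> rat \<Rightarrow> quat ring" where
  "quat_ring a b = \<lparr>carrier = UNIV, mult = qmul a b, one = qone, zero = qzero, add = qadd\<rparr>"

text \<open>The involution with i* = i, j* = j (hence (ij)* = ji = -ij).\<close>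
definition qstar :: "quat \<Rightarrow> quat" where
  "qstar x = (case x of (x0,x1,x2,x3) \<Rightarrow> (x0, x1, x2, -x3))"

definition is_division_algebra :: "rat \<Rightarrow> rat \<Rightarrow> bool" where
  "is_division_algebra a b \<longleftrightarrow>
     (\<forall>x. x \<noteq> qzero \<longrightarrow> (\<exists>y. qmul a b x y = qone \<and> qmul a b y x = qone))"

text \<open>Elements of K are written as pairs (y0,y1) standing for y0 + y1 i.\<close>
type_synonym kel = "rat \<times> rat"

definition kemb :: "kel \<Rightarrow> quat" where
  "kemb y = (case y of (y0,y1) \<Rightarrow> (y0, y1, 0, 0))"

definition Kset :: "quat set" where
  "Kset = range kemb"

definition ordering_cone :: "rat \<Rightarrow> rat \<Rightarrow> quat set \<Rightarrow> bool" where
  "ordering_cone a b P \<longleftrightarrow>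
     P \<subseteq> Kset
   \<and> (\<forall>x\<in>P. \<forall>y\<in>P. qadd x y \<in> P)
   \<and> (\<forall>x\<in>P. \<forall>y\<in>P. qmul a b x y \<in> P)
   \<and> P \<union> {\<ominus>\<^bsub>quat_ring a b\<^esub> x | x. x \<in> P} = Kset
   \<and> P \<inter> {\<ominus>\<^bsub>quat_ring a b\<^esub> x | x. x \<in> P} = {qzero}"

definition kadd :: "kel \<Rightarrow> kel \<Rightarrow> kel" where
  "kadd x y = (fst x + fst y, snd x + snd y)"

definition kmul :: "rat \<Rightarrow> kel \<Rightarrow> kel \<Rightarrow> kel" where
  "kmul a x y = (fst x * fst y + a * snd x * snd y, fst x * snd y + snd x * fst y)"

text \<open>(m11, m12, m21, m22)\<close>
type_synonym m2 = "kel \<times> kel \<times> kel \<times> kel"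

definition m2add :: "m2 \<Rightarrow> m2 \<Rightarrow> m2" where
  "m2add X Y = (case X of (x11,x12,x21,x22) \<Rightarrow> case Y of (y11,y12,y21,y22) \<Rightarrow>
     (kadd x11 y11, kadd x12 y12, kadd x21 y21, kadd x22 y22))"

definition m2mul :: "rat \<Rightarrow> m2 \<Rightarrow> m2 \<Rightarrow> m2" where
  "m2mul a X Y = (case X of (x11,x12,x21,x22) \<Rightarrow> case Y of (y11,y12,y21,y22) \<Rightarrow>
     (kadd (kmul a x11 y11) (kmul a x12 y21), kadd (kmul a x11 y12) (kmul a x12 y22),
      kadd (kmul a x21 y11) (kmul a x22 y21), kadd (kmul a x21 y12) (kmul a x22 y22)))"

definition m2one :: m2 where "m2one = ((1,0),(0,0),(0,0),(1,0))"
definition m2zero :: m2 where "m2zero = ((0,0),(0,0),(0,0),(0,0))"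

definition m2_ring :: "rat \<Rightarrow> m2 ring" where
  "m2_ring a = \<lparr>carrier = UNIV, mult = m2mul a, one = m2one, zero = m2zero, add = m2add\<rparr>"

definition m2transpose :: "m2 \<Rightarrow> m2" where
  "m2transpose X = (case X of (x11,x12,x21,x22) \<Rightarrow> (x11,x21,x12,x22))"

definition Amat :: "rat \<Rightarrow> m2" where "Amat b = ((1,0),(0,0),(0,0),(b,0))"
definition Ainv :: "rat \<Rightarrow> m2" where "Ainv b = ((1,0),(0,0),(0,0),(inverse b,0))"

text \<open>X^# = A^{-1} X^T A  (the involution on K is the identity).\<close>
definition msharp :: "rat \<Rightarrow> rat \<Rightarrow> m2 \<Rightarrow> m2" where
  "msharp a b X = m2mul a (m2mul a (Ainv b) (m2transpose X)) (Amat b)"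

definition lreg :: "rat \<Rightarrow> rat \<Rightarrow> quat \<Rightarrow> m2" where
  "lreg a b d = (THE X. case X of (l11,l12,l21,l22) \<Rightarrow>
       qmul a b d qone = qadd (qmul a b qone (kemb l11)) (qmul a b qj (kemb l21))
     \<and> qmul a b d qj = qadd (qmul a b qone (kemb l12)) (qmul a b qj (kemb l22)))"

end

theory Submission imports Defs begin

lemma quat_neg: "\<ominus>\<^bsub>quat_ring a b\<^esub> x = (case x of (x0,x1,x2,x3) \<Rightarrow> (-x0,-x1,-x2,-x3))"
  unfolding a_inv_def m_inv_def
  apply (rule the_equality)
   apply (cases x, simp add: quat_ring_def qadd_def qzero_def)
  apply (cases x, auto simp add: quat_ring_def qadd_def qzero_def)
  done

lemma m2_neg: "\<ominus>\<^bsub>m2_ring a\<^esub> X = (case X of ((p1,q1),(p2,q2),(p3,q3),(p4,q4)) \<Rightarrow> ((-p1,-q1),(-p2,-q2),(-p3,-q3),(-p4,-q4)))"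
  unfolding a_inv_def m_inv_def
  apply (rule the_equality)
   apply (cases X, simp add: m2_ring_def m2add_def m2zero_def kadd_def split: prod.splits)
  apply (cases X, auto simp add: m2_ring_def m2add_def m2zero_def kadd_def split: prod.splits)
  done

lemma lreg_eq: "b \<noteq> 0 \<Longrightarrow> lreg a b (x0,x1,x2,x3) = ((x0,x1),(b*x2,b*x3),(x2,-x3),(x0,-x1))"
  unfolding lreg_def
  apply (rule the_equality)
   apply (simp add: qmul_def qadd_def qone_def qj_def kemb_def)
  apply (auto simp add: qmul_def qadd_def qone_def qj_def kemb_def split: prod.splits)
  done

lemma qmul_assoc: "qmul a b (qmul a b x y) z = qmul a b x (qmul a b y z)"
  by (cases x; cases y; cases z) (simp add: qmul_def algebra_simps)

lemma msharp_eq: "b \<noteq> 0 \<Longrightarrow> msharp a b (x11,x12,x21,x22) = (x11, (b*fst x21, b*snd x21), (fst x12/b, snd x12/b), x22)"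
  by (cases x22) (simp add: msharp_def m2mul_def Ainv_def Amat_def m2transpose_def kadd_def kmul_def divide_inverse split: prod.splits)


definition phi :: "real \<Rightarrow> kel \<Rightarrow> real" where
  "phi s y = of_rat (fst y) + of_rat (snd y) * s"

definition Qf :: "real \<Rightarrow> rat \<Rightarrow> m2 \<Rightarrow> real \<Rightarrow> real \<Rightarrow> real" where
  "Qf s b X u v = phi s (fst X) * u^2 + (phi s (fst (snd X)) + of_rat b * phi s (fst (snd (snd X)))) * u * v
     + of_rat b * phi s (snd (snd (snd X))) * v^2"

definition Lc :: "rat \<Rightarrow> rat \<Rightarrow> real \<Rightarrow> m2 set" where
  "Lc a b s = {X. msharp a b X = X \<and> (\<forall>u v. Qf s b X u v \<ge> 0)}"

lemma phi_kadd[simp]: "phi s (kadd x y) = phi s x + phi s y"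
  by (simp add: phi_def kadd_def of_rat_add algebra_simps)

lemma phi_kmul[simp]: "s * s = of_rat a \<Longrightarrow> phi s (kmul a x y) = phi s x * phi s y"
  by (simp add: phi_def kmul_def of_rat_add of_rat_mult algebra_simps)

lemma phi_scale[simp]: "phi s (c * fst y, c * snd y) = of_rat c * phi s y"
  by (simp add: phi_def of_rat_mult algebra_simps)

lemma phi_div[simp]: "phi s (fst y / c, snd y / c) = phi s y / of_rat c"
  by (simp add: phi_def of_rat_divide add_divide_distrib)

lemma phi_inj: assumes "\<forall>p q. of_rat p + of_rat q * s = 0 \<longrightarrow> p = 0 \<and> q = 0"
  shows "phi s x = phi s y \<longleftrightarrow> x = y"
proof
  assume h: "phi s x = phi s y"
  have "of_rat (fst x - fst y) + of_rat (snd x - snd y) * s = 0"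
    using h by (simp add: phi_def of_rat_diff algebra_simps)
  then have "fst x - fst y = 0 \<and> snd x - snd y = 0" using assms by blast
  then show "x = y" by (simp add: prod_eq_iff)
qed simp

lemma herm_iff:
  assumes "b \<noteq> 0" "\<forall>p q. of_rat p + of_rat q * s = 0 \<longrightarrow> p = 0 \<and> q = 0"
  shows "msharp a b (x11,x12,x21,x22) = (x11,x12,x21,x22) \<longleftrightarrow> phi s x12 = of_rat b * phi s x21"
proof -
  have "msharp a b (x11,x12,x21,x22) = (x11,x12,x21,x22) \<longleftrightarrow> (b * fst x21, b * snd x21) = x12"
    using assms(1) by (cases x12; cases x21) (auto simp: msharp_eq field_simps)
  also have "\<dots> \<longleftrightarrow> phi s (b * fst x21, b * snd x21) = phi s x12"
    using phi_inj[OF assms(2)] by metis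
  finally show ?thesis by auto
qed

lemma Qf_cong:
  assumes "b \<noteq> 0" "s * s = of_rat a"
  shows "Qf s b (m2mul a (m2mul a (c11,c12,c21,c22) X) (msharp a b (c11,c12,c21,c22))) u v
    = Qf s b X (phi s c11 * u + of_rat b * phi s c21 * v) ((phi s c12 * u + of_rat b * phi s c22 * v) / of_rat b)"
  using assms
  apply (cases X)
  apply (simp add: msharp_eq m2mul_def Qf_def)
  apply (simp add: field_simps power2_eq_square)
  apply algebra
  done

lemma Qf_add: "Qf s b (m2add X Y) u v = Qf s b X u v + Qf s b Y u v"
  by (cases X; cases Y) (simp add: m2add_def Qf_def algebra_simps)

lemma Qf_neg: "Qf s b (\<ominus>\<^bsub>m2_ring a\<^esub> X) u v = - Qf s b X u v"
  by (cases X) (simp add: m2_neg Qf_def phi_def of_rat_minus algebra_simps split: prod.splits)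

lemma Lc_cone:
  assumes b: "b > 0" and sa: "s * s = of_rat a"
    and irr: "\<forall>p q. of_rat p + of_rat q * s = 0 \<longrightarrow> p = 0 \<and> q = 0"
  shows "unital_hermitian_cone (m2_ring a) (msharp a b) (Lc a b s)"
proof -
  have b0: "b \<noteq> 0" using b by simp
  have rb: "(of_rat b :: real) > 0" using b by simp
  have herm: "msharp a b X = X \<longleftrightarrow> phi s (fst (snd X)) = of_rat b * phi s (fst (snd (snd X)))" for X
    using herm_iff[OF b0 irr] by (cases X) auto
  have 1: "m2one \<in> Lc a b s"
  proof -
    have "msharp a b m2one = m2one" using b0 by (simp add: m2one_def msharp_eq)
    moreover have "Qf s b m2one u v \<ge> 0" for u v
      using rb by (simp add: m2one_def Qf_def phi_def)
    ultimately show ?thesis by (simp add: Lc_def)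
  qed
  have 2: "m2add X Y \<in> Lc a b s" if "X \<in> Lc a b s" "Y \<in> Lc a b s" for X Y
  proof -
    have "phi s (fst (snd (m2add X Y))) = of_rat b * phi s (fst (snd (snd (m2add X Y))))"
      using that herm[of X] herm[of Y]
      by (cases X; cases Y) (simp add: Lc_def m2add_def algebra_simps)
    then show ?thesis using that by (auto simp: Lc_def herm Qf_add intro!: add_nonneg_nonneg)
  qed
  have 3: "m2mul a (m2mul a C X) (msharp a b C) \<in> Lc a b s" if "X \<in> Lc a b s" for C X
  proof -
    obtain c11 c12 c21 c22 where C: "C = (c11,c12,c21,c22)" by (cases C) auto
    obtain x11 x12 x21 x22 where X: "X = (x11,x12,x21,x22)" by (cases X) auto
    have hx: "phi s x12 = of_rat b * phi s x21" using that herm[of X] X by (simp add: Lc_def)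
    have "phi s (fst (snd (m2mul a (m2mul a C X) (msharp a b C)))) =
        of_rat b * phi s (fst (snd (snd (m2mul a (m2mul a C X) (msharp a b C)))))"
      using b0 sa hx rb unfolding C X
      by (simp add: msharp_eq m2mul_def field_simps) algebra
    moreover have "Qf s b (m2mul a (m2mul a C X) (msharp a b C)) u v \<ge> 0" for u v
      unfolding C using Qf_cong[OF b0 sa] that by (simp add: Lc_def)
    ultimately show ?thesis by (simp add: Lc_def herm)
  qed
  have 4: "Lc a b s \<inter> {\<ominus>\<^bsub>m2_ring a\<^esub> x | x. x \<in> Lc a b s} = {m2zero}"
  proof (intro equalityI subsetI)
    fix X assume "X \<in> Lc a b s \<inter> {\<ominus>\<^bsub>m2_ring a\<^esub> x | x. x \<in> Lc a b s}"
    then obtain Y where XL: "X \<in> Lc a b s" and YL: "Y \<in> Lc a b s" and XY: "X = \<ominus>\<^bsub>m2_ring a\<^esub> Y" by auto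
    have q0: "Qf s b X u v = 0" for u v
      using XL YL XY Qf_neg[of s b a Y u v] by (simp add: Lc_def) (smt (verit) Qf_neg)
    obtain x11 x12 x21 x22 where X: "X = (x11,x12,x21,x22)" by (cases X) auto
    have hx: "phi s x12 = of_rat b * phi s x21" using XL herm[of X] X by (simp add: Lc_def)
    have a1: "phi s x11 = 0" using q0[of 1 0] X by (simp add: Qf_def)
    have a4: "phi s x22 = 0" using q0[of 0 1] X rb by (simp add: Qf_def)
    have "phi s x12 + of_rat b * phi s x21 = 0" using q0[of 1 1] X a1 a4 by (simp add: Qf_def)
    then have a3: "phi s x21 = 0" using hx rb by simp
    then have a2: "phi s x12 = 0" using hx by simp
    have z: "phi s x = 0 \<Longrightarrow> x = (0,0)" for x using phi_inj[OF irr, of x "(0,0)"] by (simp add: phi_def)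
    show "X \<in> {m2zero}" using z[OF a1] z[OF a2] z[OF a3] z[OF a4] X by (simp add: m2zero_def)
  next
    fix X assume "X \<in> {m2zero}"
    then have X: "X = m2zero" by simp
    have "m2zero \<in> Lc a b s" using b0 by (simp add: Lc_def m2zero_def msharp_eq Qf_def phi_def)
    moreover have "m2zero = \<ominus>\<^bsub>m2_ring a\<^esub> m2zero" by (simp add: m2_neg m2zero_def)
    ultimately show "X \<in> Lc a b s \<inter> {\<ominus>\<^bsub>m2_ring a\<^esub> x | x. x \<in> Lc a b s}" using X by blast
  qed
  show ?thesis unfolding unital_hermitian_cone_def
    using 1 2 3 4 by (auto simp: m2_ring_def Lc_def)
qed

lemma not_square:
  assumes "is_division_algebra a b" shows "c * c \<noteq> a"
proof
  assume h: "c * c = a"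
  define x :: quat where "x = (-c,1,0,0)"
  define y :: quat where "y = (c,1,0,0)"
  have xy: "qmul a b x y = qzero" using h by (simp add: x_def y_def qmul_def qzero_def)
  have "x \<noteq> qzero" by (simp add: x_def qzero_def)
  then obtain z where "qmul a b x z = qone \<and> qmul a b z x = qone" using assms is_division_algebra_def by blast
  then have "qmul a b (qmul a b z x) y = y" by (simp add: y_def qone_def qmul_def)
  moreover have "qmul a b z (qmul a b x y) = qzero" using xy by (cases z) (simp add: qmul_def qzero_def)
  ultimately show False using qmul_assoc[of a b z x y] by (simp add: y_def qzero_def)
qed

lemma irr:
  fixes s :: real
  assumes "is_division_algebra a b" "s * s = of_rat a"
  shows "\<forall>p q. of_rat p + of_rat q * s = 0 \<longrightarrow> p = 0 \<and> q = 0"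
proof (intro allI impI)
  fix p q assume h: "of_rat p + of_rat q * s = (0::real)"
  show "p = 0 \<and> q = 0"
  proof (cases "q = 0")
    case True then show ?thesis using h by simp
  next
    case False
    then have "s = of_rat (- p / q)" using h by (simp add: of_rat_divide of_rat_minus field_simps)
    then have "of_rat ((-p/q) * (-p/q)) = (of_rat a :: real)" using assms(2) by (metis of_rat_mult)
    then have "(-p/q) * (-p/q) = a" by (rule of_rat_eq_iff[THEN iffD1])
    then show ?thesis using not_square[OF assms(1)] by blast
  qed
qed

lemma Qf_lreg_swap:
  assumes b: "b > 0" and "t = - s"
  shows "Qf t b ((x0,x1),(b*x2,b*0),(x2,-0),(x0,-x1)) u v
       = Qf s b ((x0,x1),(b*x2,b*0),(x2,-0),(x0,-x1)) (sqrt (of_rat b) * v) (u / sqrt (of_rat b))"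
proof -
  have rb: "(of_rat b :: real) > 0" using b by simp
  have sq: "sqrt (of_rat b) * sqrt (of_rat b) = (of_rat b :: real)" using rb by simp
  have sp: "sqrt (of_rat b :: real) > 0" using rb by simp
  show ?thesis using assms(2) sp sq
    by (simp add: Qf_def phi_def of_rat_mult of_rat_minus field_simps power2_eq_square) algebra
qed

lemma part2:
  assumes "a > 0" "b > 0" "is_division_algebra a b"
  shows "\<exists>L1 L2. unital_hermitian_cone (m2_ring a) (msharp a b) L1
              \<and> unital_hermitian_cone (m2_ring a) (msharp a b) L2
              \<and> L1 \<noteq> L2
              \<and> {d. lreg a b d \<in> L1} = {d. lreg a b d \<in> L2}"
proof -
  define s where "s = sqrt (of_rat a :: real)"
  have ra: "(of_rat a :: real) > 0" using assms by simp
  have s1: "s * s = of_rat a" using ra by (simp add: s_def)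
  have s2: "(-s) * (-s) = of_rat a" using s1 by simp
  have spos: "s > 0" using ra by (simp add: s_def)
  have b0: "b \<noteq> 0" using assms by simp
  define X :: m2 where "X = ((0,1),(0,0),(0,0),(0,1))"
  have hX: "msharp a b X = X" using b0 by (simp add: X_def msharp_eq)
  have "X \<in> Lc a b s" using hX spos assms(2) by (simp add: Lc_def X_def Qf_def phi_def)
  moreover have "X \<notin> Lc a b (-s)"
  proof
    assume "X \<in> Lc a b (-s)"
    then have "Qf (-s) b X 1 0 \<ge> 0" by (simp add: Lc_def)
    then show False using spos by (simp add: X_def Qf_def phi_def)
  qed
  ultimately have ne: "Lc a b s \<noteq> Lc a b (-s)" by blast
  have pre: "{d. lreg a b d \<in> Lc a b s} = {d. lreg a b d \<in> Lc a b (-s)}"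
  proof -
    have key: "lreg a b d \<in> Lc a b t" if "lreg a b d \<in> Lc a b s'" "t = - s'" for d s' t
    proof -
      obtain x0 x1 x2 x3 where d: "d = (x0,x1,x2,x3)" by (cases d) auto
      have h: "msharp a b (lreg a b d) = lreg a b d" using that by (simp add: Lc_def)
      then have x3: "x3 = 0" using b0 by (simp add: d lreg_eq msharp_eq)
      have L: "lreg a b d = ((x0,x1),(b*x2,b*0),(x2,-0),(x0,-x1))" by (simp add: d x3 lreg_eq b0)
      have "Qf t b (lreg a b d) u v \<ge> 0" for u v
        using that(1) Qf_lreg_swap[OF assms(2) that(2), of x0 x1 x2 u v] unfolding L by (simp add: Lc_def)
      then show ?thesis using h by (simp add: Lc_def)
    qed
    show ?thesis using key[of _ s "-s"] key[of _ "-s" s] by auto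
  qed
  show ?thesis
    using Lc_cone[OF assms(2) s1 irr[OF assms(3) s1]] Lc_cone[OF assms(2) s2 irr[OF assms(3) s2]] ne pre
    by blast
qed

lemma sc_mul: "qmul a b (c,0,0,0) (d,0,0,0) = (c*d,0,0,0)" by (simp add: qmul_def)
lemma sc_add: "qadd (c,0,0,0) (d,0,0,0) = (c+d,0,0,0)" by (simp add: qadd_def)
lemma sc_K: "(c,0,0,0) \<in> Kset" by (simp add: Kset_def kemb_def image_iff)

lemma cone_sq:
  assumes P: "ordering_cone a b P" and y: "y \<in> Kset" shows "qmul a b y y \<in> P"
proof -
  from P have U: "P \<union> {\<ominus>\<^bsub>quat_ring a b\<^esub> x | x. x \<in> P} = Kset" and M: "\<forall>x\<in>P. \<forall>y\<in>P. qmul a b x y \<in> P"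
    by (auto simp: ordering_cone_def)
  from y U have "y \<in> P \<or> (\<exists>x\<in>P. y = \<ominus>\<^bsub>quat_ring a b\<^esub> x)" by blast
  then show ?thesis
  proof
    assume "y \<in> P" then show ?thesis using M by blast
  next
    assume "\<exists>x\<in>P. y = \<ominus>\<^bsub>quat_ring a b\<^esub> x"
    then obtain x where x: "x \<in> P" "y = \<ominus>\<^bsub>quat_ring a b\<^esub> x" by blast
    then have "qmul a b y y = qmul a b x x" by (cases x) (simp add: quat_neg qmul_def)
    then show ?thesis using M x by simp
  qed
qed

lemma cone_pos:
  assumes P: "ordering_cone a b P" and c: "c > 0" shows "(c,0,0,0) \<in> P"
proof -
  have A: "\<forall>x\<in>P. \<forall>y\<in>P. qadd x y \<in> P" and M: "\<forall>x\<in>P. \<forall>y\<in>P. qmul a b x y \<in> P"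
    using P by (auto simp: ordering_cone_def)
  have one: "(1,0,0,0) \<in> P" using cone_sq[OF P sc_K[of 1]] by (simp add: sc_mul)
  have nat: "(of_nat (Suc n),0,0,0) \<in> P" for n
  proof (induction n)
    case 0 then show ?case using one by simp
  next
    case (Suc n)
    then have "qadd (of_nat (Suc n),0,0,0) (1,0,0,0) \<in> P" using A one by blast
    then show ?case by (simp add: sc_add)
  qed
  obtain p q where pq: "quotient_of c = (p, q)" by (cases "quotient_of c") auto
  have cq: "c = of_int p / of_int q" and q: "q > 0" using pq quotient_of_div quotient_of_denom_pos by blast+
  have p: "p > 0" using c cq q by (simp add: zero_less_divide_iff)
  define n where "n = nat p - 1"
  define m where "m = nat q - 1"
  have "Suc n = nat p" "Suc m = nat q" using p q by (simp_all add: n_def m_def)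
  then have n: "of_int p = (of_nat (Suc n) :: rat)" and m: "of_int q = (of_nat (Suc m) :: rat)"
    using p q by simp_all
  define r :: rat where "r = of_nat (Suc m)"
  have r0: "r \<noteq> 0" by (simp add: r_def)
  have "qmul a b (1/r,0,0,0) (1/r,0,0,0) \<in> P" using cone_sq[OF P sc_K] .
  then have s: "(1/(r*r),0,0,0) \<in> P" by (simp add: sc_mul)
  have "qmul a b (of_nat (Suc n),0,0,0) (r,0,0,0) \<in> P" using M nat[of n] nat[of m] r_def by blast
  then have "(of_nat (Suc n) * r,0,0,0) \<in> P" by (simp add: sc_mul)
  then have "qmul a b (of_nat (Suc n) * r,0,0,0) (1/(r*r),0,0,0) \<in> P" using M s by blast
  then have "(of_nat (Suc n) / r,0,0,0) \<in> P" using r0 by (simp add: sc_mul)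
  then show ?thesis using cq n m r_def by simp
qed

lemma not_restr:
  assumes b: "b > 0" and P: "ordering_cone a b P" and e: "e = 1 \<or> e = -1" and ie: "(0,e,0,0) \<in> P"
  shows "\<not> (\<exists>M. unital_hermitian_cone (quat_ring a b) qstar M \<and> P = M \<inter> Kset)"
proof
  assume "\<exists>M. unital_hermitian_cone (quat_ring a b) qstar M \<and> P = M \<inter> Kset"
  then obtain M where M: "unital_hermitian_cone (quat_ring a b) qstar M" and PM: "P = M \<inter> Kset" by blast
  have "(0,e,0,0) \<in> M" using ie PM by blast
  moreover have C: "\<forall>c\<in>carrier (quat_ring a b). \<forall>x\<in>M. c \<otimes>\<^bsub>quat_ring a b\<^esub> x \<otimes>\<^bsub>quat_ring a b\<^esub> qstar c \<in> M"
    using M unfolding unital_hermitian_cone_def by blast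
  moreover have "qj \<in> carrier (quat_ring a b)" by (simp add: quat_ring_def)
  ultimately have "qj \<otimes>\<^bsub>quat_ring a b\<^esub> (0,e,0,0) \<otimes>\<^bsub>quat_ring a b\<^esub> qstar qj \<in> M" by blast
  then have "qmul a b (qmul a b qj (0,e,0,0)) (qstar qj) \<in> M" by (simp add: quat_ring_def)
  then have m1: "(0,-b*e,0,0) \<in> M" by (simp add: qmul_def qj_def qstar_def)
  have k: "(0,c,0,0) \<in> Kset" for c by (simp add: Kset_def kemb_def image_iff)
  have p1: "(0,-b*e,0,0) \<in> P" using m1 k PM by blast
  have "qmul a b (b,0,0,0) (0,e,0,0) \<in> P" using P cone_pos[OF P b] ie by (auto simp: ordering_cone_def)
  then have p2: "(0,b*e,0,0) \<in> P" by (simp add: qmul_def)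
  have "(0,-b*e,0,0) = \<ominus>\<^bsub>quat_ring a b\<^esub> (0,b*e,0,0)" by (simp add: quat_neg)
  then have "(0,-b*e,0,0) \<in> P \<inter> {\<ominus>\<^bsub>quat_ring a b\<^esub> x | x. x \<in> P}" using p1 p2 by blast
  moreover have "P \<inter> {\<ominus>\<^bsub>quat_ring a b\<^esub> x | x. x \<in> P} = {qzero}" using P by (simp only: ordering_cone_def)
  ultimately have "(0,-b*e,0,0) = qzero" by blast
  then show False using b e by (auto simp: qzero_def)
qed

theorem mainTheorem16:
  fixes a b :: rat
  assumes "a > 0" and "b > 0"
    and "is_division_algebra a b"
  shows "(\<forall>N1 N2. ordering_cone a b N1 \<and> ordering_cone a b N2 \<and> qi \<in> N1
              \<and> \<ominus>\<^bsub>quat_ring a b\<^esub> qi \<in> N2 \<longrightarrow>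
             (b, 0, 0, 0) \<in> N1 \<inter> N2
           \<and> \<not> (\<exists>M. unital_hermitian_cone (quat_ring a b) qstar M \<and> N1 = M \<inter> Kset)
           \<and> \<not> (\<exists>M. unital_hermitian_cone (quat_ring a b) qstar M \<and> N2 = M \<inter> Kset))
       \<and> (\<exists>L1 L2. unital_hermitian_cone (m2_ring a) (msharp a b) L1
              \<and> unital_hermitian_cone (m2_ring a) (msharp a b) L2
              \<and> L1 \<noteq> L2
              \<and> {d. lreg a b d \<in> L1} = {d. lreg a b d \<in> L2})"
proof (intro conjI allI impI)
  fix N1 N2 assume h: "ordering_cone a b N1 \<and> ordering_cone a b N2 \<and> qi \<in> N1
              \<and> \<ominus>\<^bsub>quat_ring a b\<^esub> qi \<in> N2"
  then have P1: "ordering_cone a b N1" and P2: "ordering_cone a b N2" and i1: "(0,1,0,0) \<in> N1"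
    and i2: "(0,-1,0,0) \<in> N2" by (auto simp: qi_def quat_neg)
  show "(b, 0, 0, 0) \<in> N1 \<inter> N2" using cone_pos[OF P1 assms(2)] cone_pos[OF P2 assms(2)] by blast
  show "\<not> (\<exists>M. unital_hermitian_cone (quat_ring a b) qstar M \<and> N1 = M \<inter> Kset)"
    using not_restr[OF assms(2) P1 _ i1] by simp
  show "\<not> (\<exists>M. unital_hermitian_cone (quat_ring a b) qstar M \<and> N2 = M \<inter> Kset)"
    using not_restr[OF assms(2) P2 _ i2] by simp
next
  show "\<exists>L1 L2. unital_hermitian_cone (m2_ring a) (msharp a b) L1
              \<and> unital_hermitian_cone (m2_ring a) (msharp a b) L2
              \<and> L1 \<noteq> L2
              \<and> {d. lreg a b d \<in> L1} = {d. lreg a b d \<in> L2}"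
    using part2[OF assms] .
qed

end
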